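(* Let $s$ be a Sturmian word of type $a$ having a factorization $s=U_1U_2\cdots U_n\cdots$ where each $U_i$ ($i\ge1$) is a non-empty prefix of $s$ and $r_s(U_i)=r_s(U_j)$ for all $i,j\ge1$. Then at least one of the following holds: (i) every $U_i$, $i\ge1$, ends in the letter $a$; (ii) for every $i\ge1$, $U_ia$ is a prefix of $s$.
   Context: A Sturmian word is an infinite word $s\in\{a,b\}^{\omega}$ that is aperiodic (not ultimately periodic) and balanced: for all factors $u,v$ of $s$ with $|u|=|v|$ one has $||u|_x-|v|_x|\le 1$ for $x\in\{a,b\}$, where $|u|_x$ is the number of occurrences of $x$ in $u$. A Sturmian word contains exactly one of the factors $aa$, $bb$; it is of type $a$ if it does not contain the factor $bb$ (and of type $b$ if it does not contain $aa$). A non-empty factor $w$ of $s$ is rich in the letter $z\in\{a,b\}$ if there is a factor $v$ of $s$ with $|v|=|w|$ and $|w|_z>|v|_z$; every non-empty factor of a Sturmian word is rich in exactly one letter, and $r_s(w)\in\{a,b\}$ denotes that letter. *)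

theory Defs
  imports Main
begin

datatype letter = a | b

type_synonym word = "nat \<Rightarrow> letter"

definition factor :: "letter list \<Rightarrow> word \<Rightarrow> bool" where
  "factor w s \<longleftrightarrow> (\<exists>i. w = map s [i..<i + length w])"

definition prefix_of :: "letter list \<Rightarrow> word \<Rightarrow> bool" where
  "prefix_of w s \<longleftrightarrow> w = map s [0..<length w]"

definition cnt :: "letter list \<Rightarrow> letter \<Rightarrow> nat" where
  "cnt w x = length (filter (\<lambda>y. y = x) w)"

definition ultimately_periodic :: "word \<Rightarrow> bool" where
  "ultimately_periodic s \<longleftrightarrow> (\<exists>p>0. \<exists>N. \<forall>n\<ge>N. s (n + p) = s n)"

definition balanced :: "word \<Rightarrow> bool" where
  "balanced s \<longleftrightarrow> (\<forall>u v x. factor u s \<longrightarrow> factor v s \<longrightarrow> length u = length v \<longrightarrow>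
      \<bar>int (cnt u x) - int (cnt v x)\<bar> \<le> 1)"

definition sturmian :: "word \<Rightarrow> bool" where
  "sturmian s \<longleftrightarrow> \<not> ultimately_periodic s \<and> balanced s"

definition type_a :: "word \<Rightarrow> bool" where
  "type_a s \<longleftrightarrow> \<not> factor [b, b] s"

definition rich_in :: "word \<Rightarrow> letter list \<Rightarrow> letter \<Rightarrow> bool" where
  "rich_in s w z \<longleftrightarrow> w \<noteq> [] \<and> factor w s \<and>
     (\<exists>v. factor v s \<and> length v = length w \<and> cnt w z > cnt v z)"

definition rich_letter :: "word \<Rightarrow> letter list \<Rightarrow> letter" where
  "rich_letter s w = (THE z. rich_in s w z)"

text \<open>s = U 0 U 1 U 2 ... (infinite concatenation of finite words, indexed from 0).\<close>
definition factorization :: "word \<Rightarrow> (nat \<Rightarrow> letter list) \<Rightarrow> bool" where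
  "factorization s U \<longleftrightarrow> (\<forall>k. U k \<noteq> []) \<and>
     (\<forall>k j. j < length (U k) \<longrightarrow> s ((\<Sum>i<k. length (U i)) + j) = U k ! j)"

end

theory Submission
  imports Defs
begin

lemma cnt_append: "cnt (xs @ ys) x = cnt xs x + cnt ys x"
  by (simp add: cnt_def)

lemma cnt_ab: "cnt w a + cnt w b = length w"
proof (induction w)
  case Nil then show ?case by (simp add: cnt_def)
next
  case (Cons y w) then show ?case by (cases y) (auto simp: cnt_def)
qed

lemma C_add: "cnt (map s [p..<p+(n+k)]) x = cnt (map s [p..<p+n]) x + cnt (map s [p+n..<p+n+k]) x"
proof -
  have "[p..<p+(n+k)] = [p..<p+n] @ [p+n..<p+n+k]"
    by (metis add.assoc le_add1 upt_add_eq_append)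
  then show ?thesis by (simp add: cnt_append)
qed

lemma C_one: "cnt (map s [p..<p+1]) a = (if s p = a then 1 else 0)"
  by (simp add: cnt_def)

lemma factor_map: "factor (map s [p..<p+n]) s"
  unfolding factor_def by auto

lemma rich_unique:
  assumes bal: "balanced s" and r: "rich_in s w x"
  shows "rich_letter s w = x"
  unfolding rich_letter_def
proof (rule the_equality)
  show "rich_in s w x" by (rule r)
next
  fix y assume ry: "rich_in s w y"
  show "y = x"
  proof (rule ccontr)
    assume ne: "y \<noteq> x"
    from r obtain v where v: "factor v s" "length v = length w" "cnt w x > cnt v x" "factor w s"
      unfolding rich_in_def by blast
    from ry obtain v' where v': "factor v' s" "length v' = length w" "cnt w y > cnt v' y"
      unfolding rich_in_def by blast
    have e1: "cnt w a + cnt w b = length w" "cnt v a + cnt v b = length w" "cnt v' a + cnt v' b = length w"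
      using cnt_ab v(2) v'(2) by metis+
    have "\<bar>int (cnt v x) - int (cnt v' x)\<bar> \<le> 1"
      using bal v(1) v'(1) v(2) v'(2) unfolding balanced_def by auto
    then show False using e1 v(3) v'(3) ne
      by (cases x; cases y) auto
  qed
qed

lemma occ:
  assumes "factorization s U"
  shows "map s [(\<Sum>i<k. length (U i))..<(\<Sum>i<k. length (U i)) + length (U k)] = U k"
  using assms unfolding factorization_def
  by (intro nth_equalityI) auto

theorem mainTheorem5:
  fixes s :: word and U :: "nat \<Rightarrow> letter list"
  assumes "sturmian s" and "type_a s"
    and "factorization s U"
    and "\<forall>i. prefix_of (U i) s"
    and "\<forall>i j. rich_letter s (U i) = rich_letter s (U j)"
  shows "(\<forall>i. last (U i) = a) \<or> (\<forall>i. prefix_of (U i @ [a]) s)"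
proof -
  define P where "P k = (\<Sum>i<k. length (U i))" for k
  have bal: "balanced s" using assms(1) unfolding sturmian_def by blast
  have ne: "U k \<noteq> []" for k using assms(3) unfolding factorization_def by blast
  have pre: "U k = map s [0..<length (U k)]" for k using assms(4) unfolding prefix_of_def by blast
  have oc: "map s [P k..<P k + length (U k)] = U k" for k
    using occ[OF assms(3)] unfolding P_def by blast
  have PS: "P (Suc k) = P k + length (U k)" for k unfolding P_def by simp
  have first: "s (P (Suc k)) = s 0" for k
  proof -
    have "0 < length (U (Suc k))" using ne by auto
    then have "s (P (Suc k)) = U (Suc k) ! 0"
      using arg_cong[OF oc[of "Suc k"], of "\<lambda>l. l ! 0"] by simp
    also have "\<dots> = s 0" using arg_cong[OF pre[of "Suc k"], of "\<lambda>l. l ! 0"] \<open>0 < _\<close> by simp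
    finally show ?thesis .
  qed
  show ?thesis
  proof (cases "s 0")
    case b
    have "last (U i) = a" for i
    proof (rule ccontr)
      assume "last (U i) \<noteq> a"
      then have lb: "last (U i) = b" by (cases "last (U i)") auto
      define n where "n = length (U i)"
      have n1: "n \<ge> 1" using ne[of i] unfolding n_def by (cases "U i") auto
      have "last (U i) = U i ! (n - 1)" using ne[of i] unfolding n_def by (simp add: last_conv_nth)
      also have "\<dots> = s (P i + (n - 1))"
        using arg_cong[OF oc[of i], of "\<lambda>l. l ! (n-1)"] n1 unfolding n_def by simp
      finally have s1: "s (P i + (n - 1)) = b" using lb by simp
      have "P i + (n - 1) + 1 = P (Suc i)" using PS[of i] n1 unfolding n_def by simp
      then have s2: "s (P i + (n - 1) + 1) = b" using first[of i] b by simp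
      have "factor [b,b] s" unfolding factor_def
        by (rule exI[of _ "P i + (n - 1)"]) (use s1 s2 in \<open>simp add: upt_rec\<close>)
      then show False using assms(2) unfolding type_a_def by blast
    qed
    then show ?thesis by blast
  next
    case a
    show ?thesis
    proof (rule ccontr)
      assume "\<not> ?thesis"
      then obtain j where "\<not> prefix_of (U j @ [a]) s" by blast
      define m where "m = length (U j)"
      have "s m \<noteq> a"
      proof
        assume "s m = a"
        then have "U j @ [a] = map s [0..<length (U j @ [a])]"
          using pre[of j] unfolding m_def by simp
        then show False using \<open>\<not> prefix_of _ _\<close> unfolding prefix_of_def by blast
      qed
      then have smb: "s m = b" by (cases "s m") auto
      have m1: "m \<ge> 1" using ne[of j] unfolding m_def by (cases "U j") auto
      have Cm: "cnt (map s [0..<0+(1+(m-1)+1)]) a = cnt (map s [0..<0+1]) a + cnt (map s [1..<1+(m-1)]) a + cnt (map s [m..<m+1]) a"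
        using C_add[of s 0 1 "m-1+1" a] C_add[of s 1 "m-1" 1 a] m1 by (simp add: add.assoc)
      have Cm2: "cnt (map s [0..<0+(m+1)]) a = cnt (map s [0..<0+m]) a + cnt (map s [m..<m+1]) a"
        using C_add[of s 0 m 1 a] by simp
      have lt: "cnt (map s [1..<1+m]) a < cnt (U j) a"
      proof -
        have "1 + (m - 1) + 1 = m + 1" using m1 by simp
        then have "cnt (map s [1..<1+(m-1)]) a + 1 = cnt (map s [0..<m]) a"
          using Cm Cm2 C_one[of s 0] C_one[of s m] a smb by simp
        moreover have "cnt (map s [1..<1+m]) a = cnt (map s [1..<1+(m-1)]) a"
          using C_add[of s 1 "m-1" 1 a] C_one[of s m] smb m1 by simp
        ultimately show ?thesis using pre[of j] unfolding m_def by simp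
      qed
      have "rich_in s (U j) a"
        unfolding rich_in_def
        using ne[of j] lt factor_map[of s 0 m] factor_map[of s 1 m] pre[of j] unfolding m_def
        by (metis add_0 length_map length_upt diff_add_inverse)
      then have rl: "rich_letter s (U j) = a" using rich_unique bal by blast
      have maxk: "cnt (map s [p..<p+length (U k)]) a \<le> cnt (U k) a" for k p
      proof (rule ccontr)
        assume "\<not> ?thesis"
        then have "cnt (map s [p..<p+length (U k)]) b < cnt (U k) b"
          using cnt_ab[of "map s [p..<p+length (U k)]"] cnt_ab[of "U k"] by simp
        then have "rich_in s (U k) b"
          unfolding rich_in_def using ne[of k] factor_map[of s 0 "length (U k)"]
            factor_map[of s p "length (U k)"] pre[of k]
          by (metis add_0 length_map length_upt diff_add_inverse)
        then have "rich_letter s (U k) = b" using rich_unique bal by blast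
        then show False using rl assms(5) by (metis letter.distinct(1))
      qed
      have maxP: "cnt (map s [p..<p+P k]) a \<le> cnt (map s [0..<P k]) a" for k p
      proof (induction k arbitrary: p)
        case 0 then show ?case by (simp add: P_def)
      next
        case (Suc k)
        have "cnt (map s [p..<p+P (Suc k)]) a = cnt (map s [p..<p+P k]) a + cnt (map s [p+P k..<p+P k+length (U k)]) a"
          using C_add[of s p "P k" "length (U k)" a] PS by simp
        also have "\<dots> \<le> cnt (map s [0..<P k]) a + cnt (U k) a"
          using Suc[of p] maxk[of "p + P k" k] by simp
        also have "\<dots> = cnt (map s [0..<P (Suc k)]) a"
          using C_add[of s 0 "P k" "length (U k)" a] PS oc[of k] by simp
        finally show ?case .
      qed
      define Q where "Q = P j"
      have sa: "s (Q + m) = a" using first[of j] PS[of j] a unfolding Q_def m_def by simp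
      have e1: "cnt (map s [0..<0+(Q+m+1)]) a = cnt (map s [0..<Q]) a + cnt (U j) a + 1"
        using C_add[of s 0 Q "m+1" a] C_add[of s Q m 1 a] oc[of j] C_one[of s "Q+m"] sa
        unfolding Q_def m_def by (simp add: add.assoc)
      have e2: "cnt (map s [0..<0+(m+1+Q)]) a = cnt (U j) a + cnt (map s [m+1..<m+1+Q]) a"
        using C_add[of s 0 "m+1" Q a] C_add[of s 0 m 1 a] pre[of j] C_one[of s m] smb
        unfolding m_def by simp
      have "cnt (map s [m+1..<m+1+Q]) a \<le> cnt (map s [0..<Q]) a"
        using maxP[of "m+1" j] unfolding Q_def by simp
      moreover have "Q+m+1 = m+1+Q" by simp
      then have "cnt (map s [0..<0+(Q+m+1)]) a = cnt (map s [0..<0+(m+1+Q)]) a" by (simp only:)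
      ultimately show False using e1 e2 by linarith
    qed
  qed
qed

end
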